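(* Let $G$ be a graph and let $p\geq 2$ be an integer. Then $\mathrm{id}^{\leq p}(G) \leq \left\lceil\frac{|E(G)|}{\lfloor p/2\rfloor}\right\rceil + \frac{1}{2}p^2$.
   Context: All graphs are finite and simple. For an oriented graph $D$ and a set $X\subseteq V(D)$, the inversion of $X$ reverses the orientation of every arc with both endvertices in $X$. For an integer $p\ge 2$, a $(\leq p)$-inversion is the inversion of a set of at most $p$ vertices. For a graph $G$, $\mathrm{id}^{\leq p}(G)$ (the $(\leq p)$-inversion diameter) is the maximum, over all ordered pairs $(\vec G_1,\vec G_2)$ of orientations of $G$ (on the same labelled vertex set), of the minimum number of $(\leq p)$-inversions whose successive application transforms $\vec G_1$ into $\vec G_2$; equivalently it is the diameter of the graph whose vertices are the orientations of $G$, two being adjacent iff one $(\leq p)$-inversion transforms one into the other. *)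

theory Defs
  imports Complex_Main
begin

definition simple_graph :: "'a set \<Rightarrow> 'a set set \<Rightarrow> bool" where
  "simple_graph V E \<longleftrightarrow> finite V \<and>
     (\<forall>e\<in>E. \<exists>u v. u \<noteq> v \<and> u \<in> V \<and> v \<in> V \<and> e = {u, v})"

definition orientation :: "'a set \<Rightarrow> 'a set set \<Rightarrow> ('a \<times> 'a) set \<Rightarrow> bool" where
  "orientation V E A \<longleftrightarrow>
     (\<forall>u v. (u, v) \<in> A \<longrightarrow> {u, v} \<in> E) \<and>
     (\<forall>u v. {u, v} \<in> E \<longrightarrow> ((u, v) \<in> A \<longleftrightarrow> (v, u) \<notin> A))"

definition invert :: "'a set \<Rightarrow> ('a \<times> 'a) set \<Rightarrow> ('a \<times> 'a) set" where
  "invert X A = {(u, v). ((u, v) \<in> A \<and> \<not> (u \<in> X \<and> v \<in> X)) \<or>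
                         ((v, u) \<in> A \<and> u \<in> X \<and> v \<in> X)}"

definition apply_inversions :: "'a set list \<Rightarrow> ('a \<times> 'a) set \<Rightarrow> ('a \<times> 'a) set" where
  "apply_inversions Xs A = foldl (\<lambda>B X. invert X B) A Xs"

definition inv_dist :: "'a set \<Rightarrow> nat \<Rightarrow> ('a \<times> 'a) set \<Rightarrow> ('a \<times> 'a) set \<Rightarrow> nat" where
  "inv_dist V p A1 A2 = Inf {length Xs | Xs.
      (\<forall>X\<in>set Xs. X \<subseteq> V \<and> card X \<le> p) \<and> apply_inversions Xs A1 = A2}"

definition inv_diam :: "'a set \<Rightarrow> 'a set set \<Rightarrow> nat \<Rightarrow> nat" where
  "inv_diam V E p = Sup {inv_dist V p A1 A2 | A1 A2.
      orientation V E A1 \<and> orientation V E A2}"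

end

theory Submission
  imports Defs
begin

definition cntE :: "'a set list \<Rightarrow> 'a set \<Rightarrow> nat" where
  "cntE Xs e = length (filter (\<lambda>X. e \<subseteq> X) Xs)"

lemma cntE_append: "cntE (Xs @ Ys) e = cntE Xs e + cntE Ys e"
  by (simp add: cntE_def)

lemma apply_inv_mem:
  "(u,v) \<in> apply_inversions Xs A \<longleftrightarrow>
     (if even (cntE Xs {u,v}) then (u,v) \<in> A else (v,u) \<in> A)"
proof (induction Xs arbitrary: A)
  case Nil
  then show ?case by (simp add: apply_inversions_def cntE_def)
next
  case (Cons X Xs)
  have "apply_inversions (X#Xs) A = apply_inversions Xs (invert X A)"
    by (simp add: apply_inversions_def)
  moreover have im: "\<And>a b. (a,b) \<in> invert X A \<longleftrightarrow> (if a\<in>X \<and> b\<in>X then (b,a)\<in>A else (a,b)\<in>A)"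
    by (auto simp: invert_def)
  moreover have "cntE (X#Xs) {u,v} = (if u\<in>X \<and> v\<in>X then Suc (cntE Xs {u,v}) else cntE Xs {u,v})"
    by (simp add: cntE_def)
  ultimately show ?case using Cons.IH[of "invert X A"]
    by (cases "u\<in>X"; cases "v\<in>X"; simp)
qed

lemma chunk:
  assumes "finite S" "c \<ge> 1"
  shows "\<exists>Ts. (\<forall>T\<in>set Ts. T \<subseteq> S \<and> card T \<le> c) \<and>
     (\<forall>u. length (filter (\<lambda>T. u\<in>T) Ts) = (if u\<in>S then 1 else 0)) \<and>
     length Ts * c \<le> card S + c - 1"
  using assms
proof (induction "card S" arbitrary: S rule: less_induct)
  case (less S)
  show ?case
  proof (cases "card S \<le> c")
    case True
    show ?thesis
    proof (cases "S = {}")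
      case True
      then show ?thesis by (rule_tac x="[]" in exI) simp
    next
      case False
      then have "card S \<ge> 1" using less.prems by (simp add: Suc_leI card_gt_0_iff)
      then show ?thesis using \<open>card S \<le> c\<close> by (rule_tac x="[S]" in exI) auto
    qed
  next
    case False
    then have "c \<le> card S" by simp
    then obtain T where T: "T \<subseteq> S" "card T = c" and fT: "finite T"
      by (rule obtain_subset_with_card_n)
    have cS': "card (S - T) = card S - c" using T fT by (simp add: card_Diff_subset)
    then have "card (S - T) < card S" using False less.prems by simp
    then obtain Ts where Ts: "\<forall>Q\<in>set Ts. Q \<subseteq> S - T \<and> card Q \<le> c"
      "\<forall>u. length (filter (\<lambda>Q. u\<in>Q) Ts) = (if u\<in>S - T then 1 else 0)"
      "length Ts * c \<le> card (S - T) + c - 1"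
      using less.hyps[of "S - T"] less.prems by blast
    show ?thesis
    proof (rule exI[of _ "T # Ts"], intro conjI allI)
      show "\<forall>T'\<in>set (T # Ts). T' \<subseteq> S \<and> card T' \<le> c" using Ts(1) T by auto
    next
      fix u show "length (filter (\<lambda>T'. u\<in>T') (T # Ts)) = (if u\<in>S then 1 else 0)"
        using Ts(2)[rule_format, of u] T by auto
    next
      show "length (T # Ts) * c \<le> card S + c - 1" using Ts(3) cS' False by simp
    qed
  qed
qed

lemma arith_q:
  fixes q p k d s :: nat
  assumes "q*(p-1) \<le> s + p - 2" "s \<le> d" "k \<le> d" "2*k \<le> p" "k \<ge> 1"
  shows "q*k \<le> d"
proof (cases q)
  case 0 then show ?thesis by simp
next
  case (Suc r)
  have p2: "p \<ge> 2" using assms by simp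
  have "q*(p-1) = r*(p-1) + (p-1)" using Suc by simp
  then have h: "r*(p-1) + 1 \<le> d" using assms p2 by linarith
  show ?thesis
  proof (cases r)
    case 0 then show ?thesis using Suc assms by simp
  next
    case (Suc r')
    have "r*(2*k-1) \<le> r*(p-1)" using assms by (intro mult_le_mono2) linarith
    moreover have "r*(2*k-1) = r*k + r*(k-1)" using assms
      by (metis add.commute add_mult_distrib2 le_add_diff_inverse mult_2 add_diff_assoc)
    moreover have "r*(k-1) \<ge> k - 1" using Suc by simp
    ultimately have "r*k + k \<le> d" using h assms by linarith
    then show ?thesis using \<open>q = Suc r\<close> by (simp add: add.commute)
  qed
qed

lemma sg_sub: "simple_graph V E \<Longrightarrow> e \<in> E \<Longrightarrow> e \<subseteq> V"
proof -
  assume "simple_graph V E" "e \<in> E"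
  then obtain u v where "u \<in> V" "v \<in> V" "e = {u,v}" unfolding simple_graph_def by meson
  then show ?thesis by simp
qed

lemma sg_finE: "simple_graph V E \<Longrightarrow> finite E"
proof -
  assume sg: "simple_graph V E"
  then have "E \<subseteq> Pow V" using sg_sub by blast
  moreover have "finite V" using sg unfolding simple_graph_def by blast
  ultimately show ?thesis by (simp add: finite_subset)
qed

lemma sg_card2: "simple_graph V E \<Longrightarrow> e \<in> E \<Longrightarrow> card e = 2"
proof -
  assume "simple_graph V E" "e \<in> E"
  then obtain u v where "u \<noteq> v" "e = {u,v}" unfolding simple_graph_def by meson
  then show ?thesis by simp
qed

lemma sg_edge_eq: "simple_graph V E \<Longrightarrow> e \<in> E \<Longrightarrow> e' \<in> E \<Longrightarrow> e' \<subseteq> e \<Longrightarrow> e' = e"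
proof -
  assume a: "simple_graph V E" "e \<in> E" "e' \<in> E" "e' \<subseteq> e"
  have c: "card e = 2" "card e' = 2" using sg_card2 a by blast+
  then have "finite e" by (intro card_ge_0_finite) simp
  then show "e' = e" using card_subset_eq[of e e'] a(4) c by argo
qed

lemma nbr_bound:
  assumes sg: "simple_graph V E"
  shows "card {y. {x,y} \<in> E} \<le> card {f\<in>E. x \<in> f}"
proof (rule card_inj_on_le)
  show "inj_on (\<lambda>y. {x,y}) {y. {x,y} \<in> E}" by (auto simp: inj_on_def doubleton_eq_iff)
  show "(\<lambda>y. {x,y}) ` {y. {x,y} \<in> E} \<subseteq> {f\<in>E. x \<in> f}" by auto
  show "finite {f\<in>E. x \<in> f}" using sg_finE[OF sg] by simp
qed

lemma nbr_fin:
  assumes sg: "simple_graph V E"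
  shows "finite {y. {x,y} \<in> E}"
proof -
  have "{y. {x,y} \<in> E} \<subseteq> V" using sg_sub[OF sg] by auto
  moreover have "finite V" using sg unfolding simple_graph_def by blast
  ultimately show ?thesis by (rule finite_subset)
qed

lemma conflict_bound:
  assumes sg: "simple_graph V E" and deg: "\<forall>x. card {f\<in>E. x\<in>f} < k" and eE: "e \<in> E"
  shows "card {f\<in>E. \<exists>y\<in>f. \<exists>x\<in>e. {x,y}\<in>E} \<le> 2*(k-1)^2"
proof -
  define W where "W = (\<Union>x\<in>e. {y. {x,y} \<in> E})"
  have fe: "finite e" using sg_card2[OF sg eE] by (metis card.infinite zero_neq_numeral)
  have finW: "finite W" unfolding W_def using fe nbr_fin[OF sg] by blast
  have "card W \<le> (\<Sum>x\<in>e. card {y. {x,y} \<in> E})" unfolding W_def using fe by (rule card_UN_le)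
  also have "\<dots> \<le> (\<Sum>x\<in>e. (k-1))"
  proof (intro sum_mono)
    fix x show "card {y. {x,y} \<in> E} \<le> k - 1" using nbr_bound[OF sg, of x] deg[rule_format, of x] by linarith
  qed
  also have "\<dots> = 2*(k-1)" using sg_card2[OF sg eE] by simp
  finally have cW: "card W \<le> 2*(k-1)" .
  have "{f\<in>E. \<exists>y\<in>f. \<exists>x\<in>e. {x,y}\<in>E} \<subseteq> (\<Union>y\<in>W. {f\<in>E. y\<in>f})" unfolding W_def by blast
  then have "card {f\<in>E. \<exists>y\<in>f. \<exists>x\<in>e. {x,y}\<in>E} \<le> card (\<Union>y\<in>W. {f\<in>E. y\<in>f})"
    using finW sg_finE[OF sg] by (intro card_mono) auto
  also have "\<dots> \<le> (\<Sum>y\<in>W. card {f\<in>E. y\<in>f})" using finW by (rule card_UN_le)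
  also have "\<dots> \<le> (\<Sum>y\<in>W. (k-1))"
  proof (intro sum_mono)
    fix y show "card {f\<in>E. y\<in>f} \<le> k - 1" using deg[rule_format, of y] by linarith
  qed
  also have "\<dots> = card W * (k-1)" by simp
  also have "\<dots> \<le> 2*(k-1)*(k-1)" using cW by (intro mult_le_mono1)
  finally show ?thesis by (simp add: power2_eq_square mult.assoc)
qed

definition indm :: "'a set set \<Rightarrow> 'a set set \<Rightarrow> bool" where
  "indm E P \<longleftrightarrow> (\<forall>e\<in>E. e \<subseteq> \<Union>P \<longrightarrow> e \<in> P)"

definition goodpart :: "'a set set \<Rightarrow> nat \<Rightarrow> 'a set set \<Rightarrow> 'a set set set \<Rightarrow> bool" where
  "goodpart E k F PP \<longleftrightarrow> (\<forall>P\<in>PP. P \<noteq> {} \<and> P \<subseteq> F \<and> card P \<le> k \<and> indm E P) \<and>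
     (\<forall>P\<in>PP. \<forall>Q\<in>PP. P \<noteq> Q \<longrightarrow> P \<inter> Q = {}) \<and> \<Union>PP = F \<and>
     card {P\<in>PP. card P < k} \<le> 2*(k-1)^2"

lemma phase2:
  assumes sg: "simple_graph V E" and k: "k \<ge> 1" and deg: "\<forall>x. card {e\<in>E. x\<in>e} < k"
    and FE: "F \<subseteq> E"
  shows "\<exists>PP. goodpart E k F PP"
proof -
  have finF: "finite F" using FE sg_finE[OF sg] finite_subset by auto
  show ?thesis using finF FE
  proof (induction F rule: finite_subset_induct')
    case empty
    show ?case by (rule exI[of _ "{}"]) (simp add: goodpart_def)
  next
    case (insert e F)
    from insert.IH obtain PP where gp: "goodpart E k F PP" by blast
    have P1: "\<And>P. P\<in>PP \<Longrightarrow> P \<noteq> {} \<and> P \<subseteq> F \<and> card P \<le> k \<and> indm E P"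
      and P2: "\<And>P Q. P\<in>PP \<Longrightarrow> Q\<in>PP \<Longrightarrow> P \<noteq> Q \<Longrightarrow> P \<inter> Q = {}"
      and P3: "\<Union>PP = F" and P4: "card {P\<in>PP. card P < k} \<le> 2*(k-1)^2"
      using gp unfolding goodpart_def by blast+
    have finPP: "finite PP"
    proof -
      have "PP \<subseteq> Pow F" using P1 by blast
      then show ?thesis using insert.hyps(1) by (simp add: finite_subset)
    qed
    define NF where "NF = {P\<in>PP. card P < k}"
    have finNF: "finite NF" using finPP NF_def by simp
    define compat where "compat P \<longleftrightarrow> card P < k \<and> indm E (insert e P)" for P
    show ?case
    proof (cases "\<exists>P\<in>PP. compat P")
      case True
      then obtain P where PP: "P \<in> PP" and cP: "compat P" by blast
      define PP' where "PP' = insert (insert e P) (PP - {P})"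
      have eF: "e \<notin> Q" if "Q \<in> PP" for Q using P1[OF that] insert.hyps(4) by blast
      have g1: "\<forall>Q\<in>PP'. Q \<noteq> {} \<and> Q \<subseteq> insert e F \<and> card Q \<le> k \<and> indm E Q"
      proof
        fix Q assume "Q \<in> PP'"
        then consider "Q = insert e P" | "Q \<in> PP" unfolding PP'_def by blast
        then show "Q \<noteq> {} \<and> Q \<subseteq> insert e F \<and> card Q \<le> k \<and> indm E Q"
        proof cases
          case 1
          have "finite P" using P1[OF PP] insert.hyps(1) finite_subset by blast
          then have "card Q \<le> card P + 1" using 1 by (simp add: card_insert_if)
          then show ?thesis using 1 cP P1[OF PP] unfolding compat_def by auto
        next
          case 2
          then show ?thesis using P1[OF 2] by blast
        qed
      qed
      have g2: "\<forall>P1\<in>PP'. \<forall>Q\<in>PP'. P1 \<noteq> Q \<longrightarrow> P1 \<inter> Q = {}"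
      proof (intro ballI impI)
        fix A B assume A: "A \<in> PP'" and B: "B \<in> PP'" and AB: "A \<noteq> B"
        have "Q \<inter> insert e P = {}" if "Q \<in> PP" "Q \<noteq> P" for Q
          using P2[OF that(1) PP that(2)] eF[OF that(1)] by blast
        then show "A \<inter> B = {}" using A B AB P2 unfolding PP'_def by blast
      qed
      have g3: "\<Union>PP' = insert e F" using P3 PP unfolding PP'_def by blast
      have "{Q\<in>PP'. card Q < k} \<subseteq> insert (insert e P) (NF - {P})"
        unfolding PP'_def NF_def by blast
      then have "card {Q\<in>PP'. card Q < k} \<le> card (insert (insert e P) (NF - {P}))"
        using finNF by (intro card_mono) auto
      also have "\<dots> \<le> Suc (card (NF - {P}))" using finNF by (simp add: card_insert_if)
      also have "\<dots> = card NF"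
      proof -
        have "P \<in> NF" using PP cP unfolding NF_def compat_def by simp
        then show ?thesis using card.remove[OF finNF] by metis
      qed
      finally have g4: "card {Q\<in>PP'. card Q < k} \<le> 2*(k-1)^2" using P4 NF_def by simp
      show ?thesis using g1 g2 g3 g4 unfolding goodpart_def by blast
    next
      case False
      note nocomp = False
      have eE: "e \<in> E" using insert.hyps(2) .
      have eF: "e \<notin> Q" if "Q \<in> PP" for Q using P1[OF that] insert.hyps(4) by blast
      define PP' where "PP' = insert {e} PP"
      have ie: "indm E {e}" unfolding indm_def using sg_edge_eq[OF sg eE] by simp
      have g1: "\<forall>Q\<in>PP'. Q \<noteq> {} \<and> Q \<subseteq> insert e F \<and> card Q \<le> k \<and> indm E Q"
        using P1 ie k unfolding PP'_def by auto
      have g2: "\<forall>P1\<in>PP'. \<forall>Q\<in>PP'. P1 \<noteq> Q \<longrightarrow> P1 \<inter> Q = {}"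
        using P2 eF unfolding PP'_def by blast
      have g3: "\<Union>PP' = insert e F" using P3 unfolding PP'_def by blast
      have g4: "card {Q\<in>PP'. card Q < k} \<le> 2*(k-1)^2"
      proof (cases "k = 1")
        case True
        then have "{Q\<in>PP'. card Q < k} = NF" unfolding PP'_def NF_def by auto
        then show ?thesis using P4 NF_def by simp
      next
        case False
        then have k2: "k \<ge> 2" using k by simp
        define C where "C = {f\<in>E. \<exists>y\<in>f. \<exists>x\<in>e. {x,y}\<in>E}"
        have cC: "card C \<le> 2*(k-1)^2" unfolding C_def by (rule conflict_bound[OF sg deg eE])
        have finC: "finite C" unfolding C_def using sg_finE[OF sg] by simp
        have eC: "e \<in> C"
        proof -
          obtain u v where uv: "u \<noteq> v" "e = {u,v}" using eE sg unfolding simple_graph_def by meson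
          then show ?thesis unfolding C_def using eE by auto
        qed
        have ex: "\<exists>f. f \<in> P \<and> f \<in> C - {e}" if PNF: "P \<in> NF" for P
        proof -
          have PP: "P \<in> PP" and cPk: "card P < k" using PNF unfolding NF_def by auto
          have "\<not> compat P" using nocomp PP by blast
          then have "\<not> indm E (insert e P)" using cPk unfolding compat_def by simp
          then obtain e' where e'E: "e' \<in> E" and sub: "e' \<subseteq> e \<union> \<Union>P" and nin: "e' \<notin> insert e P"
            unfolding indm_def by auto
          have iP: "indm E P" using P1[OF PP] by blast
          have nsub: "\<not> e' \<subseteq> \<Union>P" using iP e'E nin unfolding indm_def by blast
          have nsube: "\<not> e' \<subseteq> e" using sg_edge_eq[OF sg eE e'E] nin by blast
          obtain a b where ab: "a \<noteq> b" "e' = {a,b}" using e'E sg unfolding simple_graph_def by meson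
          have "\<exists>x y. e' = {x,y} \<and> x \<in> e \<and> y \<notin> e \<and> y \<in> \<Union>P"
          proof (cases "a \<in> \<Union>P")
            case True
            then have "b \<notin> \<Union>P" using nsub ab by auto
            then have "b \<in> e" using sub ab by auto
            then have "a \<notin> e" using nsube ab by auto
            then show ?thesis using True \<open>b \<in> e\<close> ab by (intro exI[of _ b] exI[of _ a]) auto
          next
            case False
            then have "a \<in> e" using sub ab by auto
            then have "b \<notin> e" using nsube ab by auto
            then have "b \<in> \<Union>P" using sub ab by auto
            then show ?thesis using \<open>a \<in> e\<close> \<open>b \<notin> e\<close> ab by (intro exI[of _ a] exI[of _ b]) auto
          qed
          then obtain x y where xy: "e' = {x,y}" "x \<in> e" "y \<notin> e" "y \<in> \<Union>P" by blast
          then obtain f where f: "f \<in> P" "y \<in> f" by blast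
          have fF: "f \<in> F" using f P1[OF PP] by blast
          have "f \<in> E" using fF insert.hyps(3) by blast
          moreover have "f \<noteq> e" using fF insert.hyps(4) by blast
          ultimately have "f \<in> C - {e}" unfolding C_def using f xy e'E by blast
          then show ?thesis using f by blast
        qed
        define g where "g P = (SOME f. f \<in> P \<and> f \<in> C - {e})" for P
        have gP: "g P \<in> P \<and> g P \<in> C - {e}" if "P \<in> NF" for P
          unfolding g_def using someI_ex[OF ex[OF that]] by blast
        have inj: "inj_on g NF"
        proof (rule inj_onI)
          fix P Q assume a: "P \<in> NF" "Q \<in> NF" "g P = g Q"
          then have "g P \<in> P \<inter> Q" using gP[OF a(1)] gP[OF a(2)] by simp
          moreover have "P \<in> PP" "Q \<in> PP" using a unfolding NF_def by auto
          ultimately show "P = Q" using P2 by blast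
        qed
        have "card NF \<le> card (C - {e})"
          by (rule card_inj_on_le[OF inj]) (use gP finC in auto)
        also have "\<dots> = card C - 1" using eC finC by simp
        moreover have "card C > 0" using eC finC card_gt_0_iff by blast
        ultimately have cNF: "card NF + 1 \<le> 2*(k-1)^2" using cC by linarith
        have "{Q\<in>PP'. card Q < k} \<subseteq> insert {e} NF" unfolding PP'_def NF_def by auto
        then have "card {Q\<in>PP'. card Q < k} \<le> card (insert {e} NF)"
          using finNF by (intro card_mono) auto
        also have "\<dots> \<le> card NF + 1" using finNF by (simp add: card_insert_if)
        finally show ?thesis using cNF by simp
      qed
      show ?thesis using g1 g2 g3 g4 unfolding goodpart_def by blast
    qed
  qed
qed

lemma phase2_sol:
  assumes sg: "simple_graph V E" and k: "k \<ge> 1" and kp: "2*k \<le> p"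
    and deg: "\<forall>x. card {e\<in>E. x\<in>e} < k" and FE: "F \<subseteq> E"
  shows "\<exists>Xs. (\<forall>X\<in>set Xs. X \<subseteq> V \<and> card X \<le> p) \<and>
     real (length Xs) \<le> real (card F) / real k + real (2*(k-1)^2) \<and>
     (\<forall>e\<in>E. odd (cntE Xs e) \<longleftrightarrow> e \<in> F)"
proof -
  obtain PP where gp: "goodpart E k F PP" using phase2[OF sg k deg FE] by blast
  have P1: "\<And>P. P\<in>PP \<Longrightarrow> P \<noteq> {} \<and> P \<subseteq> F \<and> card P \<le> k \<and> indm E P"
    and P2: "\<And>P Q. P\<in>PP \<Longrightarrow> Q\<in>PP \<Longrightarrow> P \<noteq> Q \<Longrightarrow> P \<inter> Q = {}"
    and P3: "\<Union>PP = F" and P4: "card {P\<in>PP. card P < k} \<le> 2*(k-1)^2"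
    using gp unfolding goodpart_def by blast+
  have finE: "finite E" using sg_finE[OF sg] .
  have finF: "finite F" using FE finE finite_subset by auto
  have finPP: "finite PP"
  proof -
    have "PP \<subseteq> Pow F" using P1 by blast
    then show ?thesis using finF by (simp add: finite_subset)
  qed
  have finP: "finite P" if "P \<in> PP" for P using P1[OF that] finF finite_subset by blast
  obtain xs where xs: "set xs = PP" "distinct xs" using finite_distinct_list[OF finPP] by blast
  define Xs where "Xs = map Union xs"
  have s1: "\<forall>X\<in>set Xs. X \<subseteq> V \<and> card X \<le> p"
  proof
    fix X assume "X \<in> set Xs"
    then obtain P where P: "P \<in> PP" "X = \<Union>P" unfolding Xs_def using xs by auto
    have "X \<subseteq> V" using P P1[OF P(1)] FE sg_sub[OF sg] by blast
    moreover have "card X \<le> p"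
    proof -
      have "card X \<le> sum card P" using P(2) card_Union_le_sum_card by blast
      also have "\<dots> = sum (\<lambda>f. 2) P"
        by (rule sum.cong) (use P1[OF P(1)] FE sg_card2[OF sg] in auto)
      also have "\<dots> = 2 * card P" by simp
      also have "\<dots> \<le> 2 * k" using P1[OF P(1)] by simp
      finally show ?thesis using kp by simp
    qed
    ultimately show "X \<subseteq> V \<and> card X \<le> p" by blast
  qed
  have s3: "\<forall>e\<in>E. odd (cntE Xs e) \<longleftrightarrow> e \<in> F"
  proof
    fix e assume eE: "e \<in> E"
    have "cntE Xs e = length (filter (\<lambda>P. e \<subseteq> \<Union>P) xs)"
      unfolding cntE_def Xs_def by (simp add: filter_map o_def)
    also have "\<dots> = card ({P. e \<subseteq> \<Union>P} \<inter> PP)" using distinct_length_filter[OF xs(2)] xs(1) by simp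
    also have "{P. e \<subseteq> \<Union>P} \<inter> PP = {P\<in>PP. e \<in> P}"
      using P1 eE unfolding indm_def by blast
    finally have c: "cntE Xs e = card {P\<in>PP. e \<in> P}" .
    show "odd (cntE Xs e) \<longleftrightarrow> e \<in> F"
    proof (cases "e \<in> F")
      case True
      then obtain P0 where P0: "P0 \<in> PP" "e \<in> P0" using P3 by blast
      then have "{P\<in>PP. e \<in> P} = {P0}" using P2 by blast
      then show ?thesis using c True by simp
    next
      case False
      then have "{P\<in>PP. e \<in> P} = {}" using P1 by blast
      then have "cntE Xs e = 0" using c by (metis card.empty)
      then show ?thesis using False by simp
    qed
  qed
  have lenXs: "length Xs = card PP" unfolding Xs_def using xs distinct_card by fastforce
  define FU where "FU = {P\<in>PP. card P = k}"
  define NF where "NF = {P\<in>PP. card P < k}"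
  have split: "PP = FU \<union> NF" "FU \<inter> NF = {}" unfolding FU_def NF_def using P1 by force+
  have cPP: "card PP = card FU + card NF"
    using split finPP by (metis card_Un_disjoint finite_Un)
  have "k * card FU = sum card FU" unfolding FU_def by simp
  also have "\<dots> \<le> sum card PP" using split finPP by (intro sum_mono2) auto
  also have "\<dots> = card (\<Union>PP)"
  proof (rule card_Union_disjoint[symmetric])
    show "pairwise disjnt PP" unfolding pairwise_def disjnt_def using P2 by blast
    show "\<And>A. A \<in> PP \<Longrightarrow> finite A" using finP by blast
  qed
  also have "\<dots> = card F" using P3 by simp
  finally have kFU: "k * card FU \<le> card F" .
  have "real (card FU) \<le> real (card F) / real k"
    using kFU k by (simp add: field_simps) (metis of_nat_le_iff of_nat_mult mult.commute)
  moreover have "real (card NF) \<le> real (2*(k-1)^2)" using P4 NF_def of_nat_le_iff by blast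
  ultimately have "real (length Xs) \<le> real (card F) / real k + real (2*(k-1)^2)"
    using lenXs cPP by simp
  then show ?thesis using s1 s3 by blast
qed

lemma main:
  assumes k: "k \<ge> 1" and kp: "2*k \<le> p"
  shows "simple_graph V E \<Longrightarrow> F \<subseteq> E \<Longrightarrow> \<exists>Xs. (\<forall>X\<in>set Xs. X \<subseteq> V \<and> card X \<le> p) \<and>
     real (length Xs) \<le> real (card E) / real k + real (2*(k-1)^2) \<and>
     (\<forall>e\<in>E. odd (cntE Xs e) \<longleftrightarrow> e \<in> F)"
proof (induction "card E" arbitrary: V E F rule: less_induct)
  case (less E V F)
  note sg = less.prems(1) and FE = less.prems(2)
  have finE: "finite E" using sg_finE[OF sg] .
  have finV: "finite V" using sg unfolding simple_graph_def by blast
  have kpos: "real k > 0" using k by simp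
  show ?case
  proof (cases "\<exists>v. card {e\<in>E. v\<in>e} \<ge> k")
    case False
    then have deg: "\<forall>x. card {e\<in>E. x\<in>e} < k" by (simp add: not_le)
    obtain Xs where Xs: "\<forall>X\<in>set Xs. X \<subseteq> V \<and> card X \<le> p"
      "real (length Xs) \<le> real (card F) / real k + real (2*(k-1)^2)"
      "\<forall>e\<in>E. odd (cntE Xs e) \<longleftrightarrow> e \<in> F"
      using phase2_sol[OF sg k kp deg FE] by blast
    have "card F \<le> card E" using FE finE by (rule card_mono[rotated])
    then have "real (card F) / real k \<le> real (card E) / real k"
      using kpos by (simp add: divide_right_mono)
    then show ?thesis using Xs by (intro exI[of _ Xs]) auto
  next
    case True
    then obtain v where dv: "card {e\<in>E. v\<in>e} \<ge> k" by blast
    define D where "D = {e\<in>E. v\<in>e}"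
    define d where "d = card D"
    define E' where "E' = {e\<in>E. v\<notin>e}"
    define V' where "V' = V - {v}"
    have dk: "d \<ge> k" using dv unfolding d_def D_def .
    have finD: "finite D" "finite E'" using finE unfolding D_def E'_def by auto
    have EDE: "E = E' \<union> D" "E' \<inter> D = {}" unfolding D_def E'_def by auto
    have cE: "card E = card E' + d" unfolding d_def using EDE finD card_Un_disjoint by metis
    have lt: "card E' < card E" using cE dk k by simp
    have sg': "simple_graph V' E'"
      unfolding simple_graph_def
    proof (intro conjI ballI)
      show "finite V'" using finV V'_def by simp
      fix e assume "e \<in> E'"
      then have eE: "e \<in> E" and ve: "v \<notin> e" unfolding E'_def by auto
      obtain a b where ab: "a \<noteq> b" "a \<in> V" "b \<in> V" "e = {a,b}" using eE sg unfolding simple_graph_def by meson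
      then have "a \<in> V'" "b \<in> V'" using ve unfolding V'_def by auto
      then show "\<exists>a b. a \<noteq> b \<and> a \<in> V' \<and> b \<in> V' \<and> e = {a, b}" using ab by blast
    qed
    have vV: "v \<in> V"
    proof -
      have "D \<noteq> {}" using dk k d_def by auto
      then obtain e where "e \<in> E" "v \<in> e" unfolding D_def by blast
      then show ?thesis using sg_sub[OF sg] by blast
    qed
    define S where "S = {u. {v,u} \<in> F}"
    have SV: "S \<subseteq> V" unfolding S_def using FE sg_sub[OF sg] by blast
    have finS: "finite S" using SV finV finite_subset by blast
    have vS: "v \<notin> S"
    proof
      assume "v \<in> S"
      then have "{v} \<in> E" unfolding S_def using FE by auto
      then show False using sg_card2[OF sg] by fastforce
    qed
    have cS: "card S \<le> d" unfolding d_def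
    proof (rule card_inj_on_le)
      show "inj_on (\<lambda>u. {v,u}) S" by (auto simp: inj_on_def doubleton_eq_iff)
      show "(\<lambda>u. {v,u}) ` S \<subseteq> D" unfolding S_def D_def using FE by auto
      show "finite D" using finD by simp
    qed
    have p1: "p - 1 \<ge> 1" using kp k by simp
    obtain Ts where Ts: "\<forall>T\<in>set Ts. T \<subseteq> S \<and> card T \<le> p - 1"
      "\<forall>u. length (filter (\<lambda>T. u\<in>T) Ts) = (if u\<in>S then 1 else 0)"
      "length Ts * (p - 1) \<le> card S + (p - 1) - 1"
      using chunk[OF finS p1] by blast
    have qk: "length Ts * k \<le> d"
      by (rule arith_q[of _ p "card S"]) (use Ts(3) cS dk kp k in auto)
    define Ys where "Ys = map (insert v) Ts"
    define F' where "F' = {e\<in>E'. (e\<in>F) \<noteq> odd (cntE Ys e)}"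
    have F'E': "F' \<subseteq> E'" unfolding F'_def by blast
    obtain Zs where Zs: "\<forall>X\<in>set Zs. X \<subseteq> V' \<and> card X \<le> p"
      "real (length Zs) \<le> real (card E') / real k + real (2*(k-1)^2)"
      "\<forall>e\<in>E'. odd (cntE Zs e) \<longleftrightarrow> e \<in> F'"
      using less.hyps[OF lt sg' F'E'] by blast
    define Xs where "Xs = Ys @ Zs"
    have s1: "\<forall>X\<in>set Xs. X \<subseteq> V \<and> card X \<le> p"
    proof
      fix X assume "X \<in> set Xs"
      then consider "X \<in> set Ys" | "X \<in> set Zs" unfolding Xs_def by auto
      then show "X \<subseteq> V \<and> card X \<le> p"
      proof cases
        case 1
        then obtain T where T: "T \<in> set Ts" "X = insert v T" unfolding Ys_def by auto
        have fT: "finite T" using T Ts(1) finS finite_subset by blast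
        have "card X \<le> card T + 1" using T fT by (simp add: card_insert_if)
        then have "card X \<le> p" using Ts(1) T p1 by fastforce
        moreover have "X \<subseteq> V" using T Ts(1) SV vV by blast
        ultimately show ?thesis by blast
      next
        case 2
        then show ?thesis using Zs(1) V'_def by blast
      qed
    qed
    have s2: "real (length Xs) \<le> real (card E) / real k + real (2*(k-1)^2)"
    proof -
      have "real (length Ts) \<le> real d / real k"
        using qk kpos by (simp add: field_simps) (metis of_nat_le_iff of_nat_mult)
      moreover have "real (card E) / real k = real d / real k + real (card E') / real k"
        using cE by (simp add: add_divide_distrib)
      ultimately show ?thesis using Zs(2) unfolding Xs_def Ys_def by simp
    qed
    have s3: "\<forall>e\<in>E. odd (cntE Xs e) \<longleftrightarrow> e \<in> F"
    proof
      fix e assume eE: "e \<in> E"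
      have cX: "cntE Xs e = cntE Ys e + cntE Zs e" unfolding Xs_def by (rule cntE_append)
      show "odd (cntE Xs e) \<longleftrightarrow> e \<in> F"
      proof (cases "v \<in> e")
        case True
        have z: "cntE Zs e = 0" unfolding cntE_def using Zs(1) True V'_def
          by (auto simp: filter_empty_conv)
        obtain a b where ab: "a \<noteq> b" "e = {a,b}" using eE sg unfolding simple_graph_def by meson
        have "\<exists>u. u \<noteq> v \<and> e = {v,u}"
        proof (cases "v = a")
          case True
          then show ?thesis using ab by (intro exI[of _ b]) simp
        next
          case False
          then have "v = b" using ab \<open>v \<in> e\<close> by blast
          then show ?thesis using ab by (intro exI[of _ a]) (auto simp: insert_commute)
        qed
        then obtain u where u: "u \<noteq> v" "e = {v,u}" by blast
        have "cntE Ys e = length (filter (\<lambda>T. u\<in>T) Ts)"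
          unfolding cntE_def Ys_def using u by (simp add: filter_map o_def)
        also have "\<dots> = (if u \<in> S then 1 else 0)" using Ts(2) by blast
        finally have "cntE Ys e = (if e \<in> F then 1 else 0)" unfolding S_def using u by simp
        then show ?thesis using cX z by simp
      next
        case False
        then have "e \<in> E'" unfolding E'_def using eE by simp
        then have "odd (cntE Zs e) \<longleftrightarrow> e \<in> F'" using Zs(3) by blast
        also have "\<dots> \<longleftrightarrow> (e\<in>F) \<noteq> odd (cntE Ys e)" unfolding F'_def using \<open>e \<in> E'\<close> by simp
        finally show ?thesis using cX by auto
      qed
    qed
    show ?thesis using s1 s2 s3 by blast
  qed
qed

lemma one_pair:
  assumes sg: "simple_graph V E" and k: "k \<ge> 1" and kp: "2*k \<le> p"
    and o1: "orientation V E A1" and o2: "orientation V E A2"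
  shows "real (inv_dist V p A1 A2) \<le> real (card E) / real k + real (2*(k-1)^2)"
proof -
  define F where "F = {e\<in>E. \<exists>u v. e = {u,v} \<and> (u,v) \<in> A1 \<and> (u,v) \<notin> A2}"
  have FE: "F \<subseteq> E" unfolding F_def by blast
  obtain Xs where Xs: "\<forall>X\<in>set Xs. X \<subseteq> V \<and> card X \<le> p"
      "real (length Xs) \<le> real (card E) / real k + real (2*(k-1)^2)"
      "\<forall>e\<in>E. odd (cntE Xs e) \<longleftrightarrow> e \<in> F"
    using main[OF k kp sg FE] by blast
  have O1: "\<And>u v. (u,v) \<in> A1 \<Longrightarrow> {u,v} \<in> E" "\<And>u v. {u,v} \<in> E \<Longrightarrow> (u,v) \<in> A1 \<longleftrightarrow> (v,u) \<notin> A1"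
    using o1 unfolding orientation_def by blast+
  have O2: "\<And>u v. (u,v) \<in> A2 \<Longrightarrow> {u,v} \<in> E" "\<And>u v. {u,v} \<in> E \<Longrightarrow> (u,v) \<in> A2 \<longleftrightarrow> (v,u) \<notin> A2"
    using o2 unfolding orientation_def by blast+
  have app: "apply_inversions Xs A1 = A2"
  proof (intro set_eqI)
    fix x :: "'a \<times> 'a"
    obtain a b where x: "x = (a,b)" by (cases x)
    have r: "(a,b) \<in> apply_inversions Xs A1 \<longleftrightarrow>
       (if even (cntE Xs {a,b}) then (a,b) \<in> A1 else (b,a) \<in> A1)" by (rule apply_inv_mem)
    show "x \<in> apply_inversions Xs A1 \<longleftrightarrow> x \<in> A2"
    proof (cases "{a,b} \<in> E")
      case True
      have ba: "{b,a} \<in> E" using True by (simp add: insert_commute)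
      have "{a,b} \<in> F \<longleftrightarrow> ((a,b) \<in> A1 \<and> (a,b) \<notin> A2) \<or> ((b,a) \<in> A1 \<and> (b,a) \<notin> A2)"
        unfolding F_def using True by (auto simp: doubleton_eq_iff)
      moreover have "odd (cntE Xs {a,b}) \<longleftrightarrow> {a,b} \<in> F" using Xs(3) True by blast
      ultimately show ?thesis using r x O1(2)[OF True] O2(2)[OF True] by auto
    next
      case False
      have ba: "{b,a} \<notin> E" using False by (simp add: insert_commute)
      have "(a,b) \<notin> A1" "(a,b) \<notin> A2" using O1(1) O2(1) False by blast+
      moreover have "(b,a) \<notin> A1" using O1(1) ba by blast
      ultimately
      show ?thesis using r x by simp
    qed
  qed
  have "inv_dist V p A1 A2 \<le> length Xs"
    unfolding inv_dist_def
    by (rule cInf_lower) (use Xs(1) app in auto)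
  then show ?thesis using Xs(2) by linarith
qed

theorem theorem1p2:
  fixes V :: "'a set" and E :: "'a set set" and p :: nat
  assumes "simple_graph V E" and "p \<ge> 2"
  shows "real (inv_diam V E p)
           \<le> real_of_int \<lceil>real (card E) / real (p div 2)\<rceil> + (real p)\<^sup>2 / 2"
proof -
  define k where "k = p div 2"
  have k: "k \<ge> 1" using assms(2) k_def by simp
  have kp: "2*k \<le> p" using k_def by simp
  define B where "B = real (card E) / real k + real (2*(k-1)^2)"
  define SS where "SS = {inv_dist V p A1 A2 | A1 A2. orientation V E A1 \<and> orientation V E A2}"
  have bnd: "\<And>x. x \<in> SS \<Longrightarrow> real x \<le> B"
    unfolding SS_def B_def using one_pair[OF assms(1) k kp] by blast
  have B0: "B \<ge> 0" unfolding B_def by simp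
  have "real (Sup SS) \<le> B"
  proof (cases "SS = {}")
    case True
    then show ?thesis using B0 by simp
  next
    case False
    have "real (card E) / real k \<le> real (card E) / 1"
      by (rule divide_left_mono) (use k in auto)
    then have ce: "real (card E) / real k \<le> real (card E)" by simp
    have "x \<le> card E + 2*(k-1)^2" if "x \<in> SS" for x
    proof -
      have "real x \<le> real (card E) + real (2*(k-1)^2)" using bnd[OF that] ce unfolding B_def by linarith
      then have "real x \<le> real (card E + 2*(k-1)^2)" by simp
      then show ?thesis by (simp only: of_nat_le_iff)
    qed
    then have "bdd_above SS" by (rule bdd_aboveI)
    then have "finite SS" by (simp add: bdd_above_nat)
    then have "Sup SS \<in> SS" using False by (simp add: Sup_nat_def)
    then show ?thesis using bnd by blast
  qed
  moreover have "real (card E) / real k \<le> real_of_int \<lceil>real (card E) / real (p div 2)\<rceil>"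
    unfolding k_def by (rule le_of_int_ceiling)
  moreover have "real (2*(k-1)^2) \<le> (real p)\<^sup>2 / 2"
  proof -
    have "2*(k-1) \<le> p" using kp by simp
    then have "(2*(k-1))^2 \<le> p^2" by (rule power_mono) simp
    then have "4*(k-1)^2 \<le> p^2" by (simp add: power_mult_distrib)
    then have "real (4*(k-1)^2) \<le> real (p^2)" by (rule of_nat_mono)
    then show ?thesis by simp
  qed
  ultimately show ?thesis unfolding SS_def B_def inv_diam_def by linarith
qed

end
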